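(* Let $\mathfrak{P}=(\rho_{t_0},\mathcal{E}_{t_1\leftarrow t_0},\dots,\mathcal{E}_{t_n\leftarrow t_{n-1}})$ be a multi-time quantum process with $\mathcal{H}_{t_k}=\mathbb{C}^d$, and let $\overrightarrow{\Upsilon}_{t_k\cdots t_0}$ denote the right KD temporal state of the process truncated at time $t_k$. Then $\overrightarrow{\Upsilon}_{t_0}=\rho_{t_0}$ and, for $k=1,\dots,n$, $$\overrightarrow{\Upsilon}_{t_k\cdots t_0}=J[\mathcal{E}_{t_k\leftarrow t_{k-1}}]\star\overrightarrow{\Upsilon}_{t_{k-1}\cdots t_0};$$ that is, $\overrightarrow{\Upsilon}_{t_n\cdots t_0}=J[\mathcal{E}_{t_n\leftarrow t_{n-1}}]\star(\cdots\star(J[\mathcal{E}_{t_1\leftarrow t_0}]\star\rho_{t_0})\cdots)$.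
   Context: A multi-time quantum process consists of a density operator $\rho_{t_0}$ on $\mathbb{C}^d$ and CPTP maps $\mathcal{E}_{t_j\leftarrow t_{j-1}}$ on $\mathbf{B}(\mathbb{C}^d)$, extended linearly to all operators. For complete families of orthogonal projectors at each time, the right temporal KD distribution is $\overrightarrow{Q}_{\rm KD}(b_n,\dots,b_0)=\operatorname{Tr}[\mathcal{E}_{t_n\leftarrow t_{n-1}}(\cdots\mathcal{E}_{t_1\leftarrow t_0}(\rho_{t_0}\Pi^{t_0}_{b_0})\Pi^{t_1}_{b_1}\cdots)\Pi^{t_n}_{b_n}]$. Let $\sigma_0=\mathbb{I},\sigma_1,\dots,\sigma_{d^2-1}$ be Hermitian operators on $\mathbb{C}^d$ with $\operatorname{Tr}\sigma_j=0$ ($j\ge1$) and $\operatorname{Tr}(\sigma_\mu\sigma_\nu)=d\,\delta_{\mu\nu}$; measuring each $\sigma_\mu$ via its spectral projectors with eigenvalue outcomes, set $\overrightarrow{T}^{\mu_n,\dots,\mu_0}=\sum a_n\cdots a_0\,\overrightarrow{Q}_{\rm KD}(a_n,\dots,a_0\mid\sigma_{\mu_n},\dots,\sigma_{\mu_0})$ and define the right KD temporal state $\overrightarrow{\Upsilon}_{t_n\cdots t_0}=d^{-(n+1)}\sum_\mu\overrightarrow{T}^{\mu_n,\dots,\mu_0}\sigma_{\mu_n}\otimes\cdots\otimes\sigma_{\mu_0}$ on $\mathcal{H}_{t_n}\otimes\cdots\otimes\mathcal{H}_{t_0}$. For $M\in\mathbf{B}(\mathcal{H}_B\otimes\mathcal{H}_A)$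 and $N\in\mathbf{B}(\mathcal{H}_C\otimes\mathcal{H}_B)$, $N\star M:=(N_{CB}\otimes\mathbb{I}_A)(\mathbb{I}_C\otimes M_{BA})$ (with $\mathcal{H}_A$ possibly trivial, so $N\star\rho=N(\mathbb{I}_C\otimes\rho)$ for $\rho\in\mathbf{B}(\mathcal{H}_B)$). The Jamiołkowski operator of a channel $\mathcal{E}:\mathbf{B}(\mathcal{H}_{t_{i-1}})\to\mathbf{B}(\mathcal{H}_{t_i})$ is $J[\mathcal{E}]=\sum_{k,l}\mathcal{E}(|k\rangle\langle l|)\otimes|l\rangle\langle k|\in\mathbf{B}(\mathcal{H}_{t_i}\otimes\mathcal{H}_{t_{i-1}})$. *)

theory Defs
  imports "Jordan_Normal_Form.Matrix"
begin

definition mtrace :: "complex mat \<Rightarrow> complex" where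
  "mtrace A = (\<Sum>i<dim_row A. A $$ (i,i))"

definition adj :: "complex mat \<Rightarrow> complex mat" where
  "adj A = mat (dim_col A) (dim_row A) (\<lambda>(i,j). cnj (A $$ (j,i)))"

definition hermitian :: "nat \<Rightarrow> complex mat \<Rightarrow> bool" where
  "hermitian n A \<longleftrightarrow> A \<in> carrier_mat n n \<and> adj A = A"

definition psd :: "nat \<Rightarrow> complex mat \<Rightarrow> bool" where
  "psd n A \<longleftrightarrow> A \<in> carrier_mat n n \<and>
     (\<forall>v \<in> carrier_vec n. Im (conjugate v \<bullet> (A *\<^sub>v v)) = 0 \<and> Re (conjugate v \<bullet> (A *\<^sub>v v)) \<ge> 0)"

definition density_op :: "nat \<Rightarrow> complex mat \<Rightarrow> bool" where
  "density_op d \<rho> \<longleftrightarrow> psd d \<rho> \<and> mtrace \<rho> = 1"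

text \<open>Kronecker (tensor) product; the first factor is the most significant index.\<close>
definition kron :: "complex mat \<Rightarrow> complex mat \<Rightarrow> complex mat" where
  "kron A B = mat (dim_row A * dim_row B) (dim_col A * dim_col B)
     (\<lambda>(i,j). A $$ (i div dim_row B, j div dim_col B) * B $$ (i mod dim_row B, j mod dim_col B))"

fun tens :: "nat \<Rightarrow> (nat \<Rightarrow> complex mat) \<Rightarrow> complex mat" where
  "tens 0 f = f 0"
| "tens (Suc k) f = kron (f (Suc k)) (tens k f)"

definition linear_op_map :: "nat \<Rightarrow> (complex mat \<Rightarrow> complex mat) \<Rightarrow> bool" where
  "linear_op_map d E \<longleftrightarrow>
     (\<forall>A \<in> carrier_mat d d. E A \<in> carrier_mat d d) \<and>
     (\<forall>A \<in> carrier_mat d d. \<forall>B \<in> carrier_mat d d. E (A + B) = E A + E B) \<and>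
     (\<forall>A \<in> carrier_mat d d. \<forall>c. E (c \<cdot>\<^sub>m A) = c \<cdot>\<^sub>m E A)"

text \<open>(id_m \<otimes> E) acting on B(C^m \<otimes> C^d), blockwise.\<close>
definition ampliate :: "nat \<Rightarrow> nat \<Rightarrow> (complex mat \<Rightarrow> complex mat) \<Rightarrow> complex mat \<Rightarrow> complex mat" where
  "ampliate m d E X = mat (m*d) (m*d)
     (\<lambda>(i,j). E (mat d d (\<lambda>(r,s). X $$ ((i div d)*d + r, (j div d)*d + s))) $$ (i mod d, j mod d))"

definition completely_positive :: "nat \<Rightarrow> (complex mat \<Rightarrow> complex mat) \<Rightarrow> bool" where
  "completely_positive d E \<longleftrightarrow>
     (\<forall>m X. psd (m*d) X \<longrightarrow> psd (m*d) (ampliate m d E X))"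

definition trace_preserving :: "nat \<Rightarrow> (complex mat \<Rightarrow> complex mat) \<Rightarrow> bool" where
  "trace_preserving d E \<longleftrightarrow> (\<forall>A \<in> carrier_mat d d. mtrace (E A) = mtrace A)"

definition cptp :: "nat \<Rightarrow> (complex mat \<Rightarrow> complex mat) \<Rightarrow> bool" where
  "cptp d E \<longleftrightarrow> linear_op_map d E \<and> completely_positive d E \<and> trace_preserving d E"

definition ket_bra :: "nat \<Rightarrow> nat \<Rightarrow> nat \<Rightarrow> complex mat" where
  "ket_bra d k l = mat d d (\<lambda>(i,j). if i = k \<and> j = l then 1 else 0)"

definition jamiolkowski :: "nat \<Rightarrow> (complex mat \<Rightarrow> complex mat) \<Rightarrow> complex mat" where
  "jamiolkowski d E = mat (d*d) (d*d)
     (\<lambda>(i,j). \<Sum>k<d. \<Sum>l<d. kron (E (ket_bra d k l)) (ket_bra d l k) $$ (i,j))"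

text \<open>N \<star> M = (N_CB \<otimes> I_A)(I_C \<otimes> M_BA), where dB = dim H_B.\<close>
definition star :: "nat \<Rightarrow> complex mat \<Rightarrow> complex mat \<Rightarrow> complex mat" where
  "star dB N M = kron N (1\<^sub>m (dim_row M div dB)) * kron (1\<^sub>m (dim_row N div dB)) M"

definition spectral_decomp :: "nat \<Rightarrow> complex mat \<Rightarrow> real set \<Rightarrow> (real \<Rightarrow> complex mat) \<Rightarrow> bool" where
  "spectral_decomp d S A P \<longleftrightarrow> finite A \<and>
     (\<forall>a \<in> A. hermitian d (P a) \<and> P a * P a = P a \<and> P a \<noteq> 0\<^sub>m d d) \<and>
     (\<forall>a \<in> A. \<forall>b \<in> A. a \<noteq> b \<longrightarrow> P a * P b = 0\<^sub>m d d) \<and>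
     (\<forall>i<d. \<forall>j<d. (\<Sum>a\<in>A. P a $$ (i,j)) = (1\<^sub>m d :: complex mat) $$ (i,j)) \<and>
     (\<forall>i<d. \<forall>j<d. (\<Sum>a\<in>A. complex_of_real a * P a $$ (i,j)) = S $$ (i,j))"

text \<open>E j is the channel E_{t_j <- t_{j-1}} (j \<ge> 1); Prj j is the projector chosen at time t_j.
  kd_chain \<rho> E Prj k = E_k( ... E_1(\<rho> Pi_0) Pi_1 ...) Pi_k.\<close>
fun kd_chain :: "complex mat \<Rightarrow> (nat \<Rightarrow> complex mat \<Rightarrow> complex mat) \<Rightarrow> (nat \<Rightarrow> complex mat) \<Rightarrow> nat \<Rightarrow> complex mat" where
  "kd_chain \<rho> E Prj 0 = \<rho> * Prj 0"
| "kd_chain \<rho> E Prj (Suc k) = E (Suc k) (kd_chain \<rho> E Prj k) * Prj (Suc k)"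

definition kd_right :: "complex mat \<Rightarrow> (nat \<Rightarrow> complex mat \<Rightarrow> complex mat) \<Rightarrow> (nat \<Rightarrow> 'b \<Rightarrow> complex mat)
    \<Rightarrow> nat \<Rightarrow> (nat \<Rightarrow> 'b) \<Rightarrow> complex" where
  "kd_right \<rho> E Proj k b = mtrace (kd_chain \<rho> E (\<lambda>j. Proj j (b j)) k)"

text \<open>T^{mu_k,...,mu_0}: sum over eigenvalue outcomes a_j of sigma_{mu_j}.
  Spec mu / SP mu give the spectral decomposition of sigma_mu.\<close>
definition kd_T :: "complex mat \<Rightarrow> (nat \<Rightarrow> complex mat \<Rightarrow> complex mat) \<Rightarrow> (nat \<Rightarrow> real set)
    \<Rightarrow> (nat \<Rightarrow> real \<Rightarrow> complex mat) \<Rightarrow> nat \<Rightarrow> (nat \<Rightarrow> nat) \<Rightarrow> complex" where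
  "kd_T \<rho> E Spec SP k \<mu> =
     (\<Sum>a \<in> PiE {..k} (\<lambda>j. Spec (\<mu> j)).
        (\<Prod>j\<le>k. complex_of_real (a j)) * kd_right \<rho> E (\<lambda>j. SP (\<mu> j)) k a)"

text \<open>Right KD temporal state of the process truncated at t_k, on H_{t_k} \<otimes> ... \<otimes> H_{t_0}.\<close>
definition kd_state :: "nat \<Rightarrow> (nat \<Rightarrow> complex mat) \<Rightarrow> complex mat \<Rightarrow> (nat \<Rightarrow> complex mat \<Rightarrow> complex mat)
    \<Rightarrow> (nat \<Rightarrow> real set) \<Rightarrow> (nat \<Rightarrow> real \<Rightarrow> complex mat) \<Rightarrow> nat \<Rightarrow> complex mat" where
  "kd_state d \<sigma> \<rho> E Spec SP k = mat (d^(k+1)) (d^(k+1)) (\<lambda>(i,j).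
     (\<Sum>\<mu> \<in> PiE {..k} (\<lambda>_. {..<d^2}).
        kd_T \<rho> E Spec SP k \<mu> * tens k (\<lambda>j. \<sigma> (\<mu> j)) $$ (i,j)) / of_nat (d^(k+1)))"

definition herm_op_basis :: "nat \<Rightarrow> (nat \<Rightarrow> complex mat) \<Rightarrow> bool" where
  "herm_op_basis d \<sigma> \<longleftrightarrow> \<sigma> 0 = 1\<^sub>m d \<and>
     (\<forall>\<mu> < d^2. hermitian d (\<sigma> \<mu>)) \<and>
     (\<forall>j. 1 \<le> j \<and> j < d^2 \<longrightarrow> mtrace (\<sigma> j) = 0) \<and>
     (\<forall>\<mu> < d^2. \<forall>\<nu> < d^2. mtrace (\<sigma> \<mu> * \<sigma> \<nu>) = of_nat d * (if \<mu> = \<nu> then 1 else 0))"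

end

theory Submission
  imports Defs "Jordan_Normal_Form.Determinant"
begin

lemma sum_split_mult: "(\<Sum>L<(a::nat)*b. f L) = (\<Sum>i<a. \<Sum>j<b. f (i*b+j))"
proof (induct a)
  case 0 then show ?case by simp
next
  case (Suc a)
  have "(\<Sum>L<Suc a*b. f L) = (\<Sum>L\<in>{0..<a*b}. f L) + (\<Sum>L\<in>{a*b..<a*b+b}. f L)"
    by (simp add: lessThan_atLeast0 sum.atLeastLessThan_concat add.commute)
  also have "(\<Sum>L\<in>{a*b..<a*b+b}. f L) = (\<Sum>j<b. f (a*b+j))"
    using sum.shift_bounds_nat_ivl[of f 0 "a*b" b]
    by (simp add: lessThan_atLeast0 add.commute)
  finally show ?case using Suc by (simp add: lessThan_atLeast0)
qed

definition lin :: "nat \<Rightarrow> (complex mat \<Rightarrow> complex) \<Rightarrow> bool" where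
 "lin d g \<longleftrightarrow> (\<forall>A\<in>carrier_mat d d. \<forall>B\<in>carrier_mat d d. g (A+B) = g A + g B) \<and>
     (\<forall>c. \<forall>A\<in>carrier_mat d d. g (c \<cdot>\<^sub>m A) = c * g A)"

lemma lin_add: "lin d g \<Longrightarrow> A \<in> carrier_mat d d \<Longrightarrow> B \<in> carrier_mat d d \<Longrightarrow> g (A+B) = g A + g B"
  unfolding lin_def by blast
lemma lin_smult: "lin d g \<Longrightarrow> A \<in> carrier_mat d d \<Longrightarrow> g (c \<cdot>\<^sub>m A) = c * g A"
  unfolding lin_def by blast

lemma lin_sum:
  assumes g: "lin d g" and fin: "finite S" and A: "\<forall>s\<in>S. A s \<in> carrier_mat d d"
  shows "g (mat d d (\<lambda>ij. \<Sum>s\<in>S. c s * A s $$ ij)) = (\<Sum>s\<in>S. c s * g (A s))"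
  using fin A
proof (induct S rule: finite_induct)
  case empty
  have "mat d d (\<lambda>ij. \<Sum>s\<in>{}. c s * A s $$ ij) = 0 \<cdot>\<^sub>m 0\<^sub>m d d"
    by (rule eq_matI) auto
  then show ?case using g unfolding lin_def by (metis mult_zero_left sum.empty zero_carrier_mat)
next
  case (insert s S)
  have "mat d d (\<lambda>ij. \<Sum>s\<in>insert s S. c s * A s $$ ij) =
     c s \<cdot>\<^sub>m A s + mat d d (\<lambda>ij. \<Sum>s\<in>S. c s * A s $$ ij)"
    using insert by (intro eq_matI) auto
  then have "g (mat d d (\<lambda>ij. \<Sum>s\<in>insert s S. c s * A s $$ ij)) =
     g (c s \<cdot>\<^sub>m A s + mat d d (\<lambda>ij. \<Sum>s\<in>S. c s * A s $$ ij))" by simp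
  also have "\<dots> = c s * g (A s) + g (mat d d (\<lambda>ij. \<Sum>s\<in>S. c s * A s $$ ij))"
    using insert lin_add[OF g, of "c s \<cdot>\<^sub>m A s" "mat d d (\<lambda>ij. \<Sum>s\<in>S. c s * A s $$ ij)"]
      lin_smult[OF g, of "A s" "c s"] by auto
  also have "g (mat d d (\<lambda>ij. \<Sum>s\<in>S. c s * A s $$ ij)) = (\<Sum>s\<in>S. c s * g (A s))"
    using insert by simp
  finally show ?case by (simp only: sum.insert[OF insert.hyps(1,2)])
qed

lemma ket_bra_carrier[simp]: "ket_bra d p q \<in> carrier_mat d d"
  unfolding ket_bra_def by auto

lemma ket_bra_dim[simp]: "dim_row (ket_bra d p q) = d" "dim_col (ket_bra d p q) = d"
  unfolding ket_bra_def by auto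

lemma ket_bra_index[simp]: "i < d \<Longrightarrow> j < d \<Longrightarrow> ket_bra d p q $$ (i,j) = (if i = p \<and> j = q then 1 else 0)"
  unfolding ket_bra_def by auto

lemma expand_mat:
  assumes "X \<in> carrier_mat d d"
  shows "X = mat d d (\<lambda>ij. \<Sum>s\<in>{..<d}\<times>{..<d}. X $$ s * ket_bra d (fst s) (snd s) $$ ij)"
proof (rule eq_matI)
  fix i j assume ij: "i < dim_row (mat d d (\<lambda>ij. \<Sum>s\<in>{..<d}\<times>{..<d}. X $$ s * ket_bra d (fst s) (snd s) $$ ij))"
     "j < dim_col (mat d d (\<lambda>ij. \<Sum>s\<in>{..<d}\<times>{..<d}. X $$ s * ket_bra d (fst s) (snd s) $$ ij))"
  then have ij': "i < d" "j < d" by auto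
  have "(\<Sum>s\<in>{..<d}\<times>{..<d}. X $$ s * ket_bra d (fst s) (snd s) $$ (i,j)) =
        (\<Sum>s\<in>{..<d}\<times>{..<d}. if s = (i,j) then X $$ s else 0)"
    using ij' by (intro sum.cong) auto
  also have "\<dots> = X $$ (i,j)" using ij' by (subst sum.delta) auto
  finally show "X $$ (i, j) = mat d d (\<lambda>ij. \<Sum>s\<in>{..<d}\<times>{..<d}. X $$ s * ket_bra d (fst s) (snd s) $$ ij) $$ (i, j)"
    using ij' by simp
qed (use assms in auto)

lemma lin_expand:
  assumes g: "lin d g" and X: "X \<in> carrier_mat d d"
  shows "g X = (\<Sum>s\<in>{..<d}\<times>{..<d}. X $$ s * g (ket_bra d (fst s) (snd s)))"
  apply (subst expand_mat[OF X])
  by (rule lin_sum[OF g]) auto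

lemma mtrace_mult:
  assumes "A \<in> carrier_mat d d" "B \<in> carrier_mat d d"
  shows "mtrace (A*B) = (\<Sum>i<d. \<Sum>j<d. A$$(i,j) * B$$(j,i))"
  using assms by (simp add: mtrace_def scalar_prod_def atLeast0LessThan)

lemma idx_div[simp]: "j < (d::nat) \<Longrightarrow> (i*d+j) div d = i"
  by simp
lemma idx_mod[simp]: "j < (d::nat) \<Longrightarrow> (i*d+j) mod d = j"
  by simp

lemma completeness:
  assumes basis: "herm_op_basis d \<sigma>" and xy: "x < d" "y < d" "a < d" "b < d"
  shows "(\<Sum>\<nu><d^2. \<sigma> \<nu> $$ (x,y) * \<sigma> \<nu> $$ (a,b)) = of_nat d * (if x = b \<and> y = a then 1 else 0)"
proof -
  have d0: "d > 0" using xy by auto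
  have car: "\<And>\<mu>. \<mu> < d^2 \<Longrightarrow> \<sigma> \<mu> \<in> carrier_mat d d"
    using basis unfolding herm_op_basis_def hermitian_def by auto
  have orth: "\<And>\<mu> \<nu>. \<mu> < d^2 \<Longrightarrow> \<nu> < d^2 \<Longrightarrow> mtrace (\<sigma> \<mu> * \<sigma> \<nu>) = of_nat d * (if \<mu> = \<nu> then 1 else 0)"
    using basis unfolding herm_op_basis_def by auto
  define A where "A = mat (d^2) (d^2) (\<lambda>(\<mu>,p). \<sigma> \<mu> $$ (p div d, p mod d))"
  define B where "B = mat (d^2) (d^2) (\<lambda>(p,\<nu>). \<sigma> \<nu> $$ (p mod d, p div d) / of_nat d)"
  have Ac: "A \<in> carrier_mat (d^2) (d^2)" and Bc: "B \<in> carrier_mat (d^2) (d^2)"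
    unfolding A_def B_def by auto
  have AB: "A * B = 1\<^sub>m (d^2)"
  proof (rule eq_matI)
    fix \<mu> \<nu> assume "\<mu> < dim_row (1\<^sub>m (d^2) :: complex mat)" "\<nu> < dim_col (1\<^sub>m (d^2) :: complex mat)"
    then have mn: "\<mu> < d^2" "\<nu> < d^2" by auto
    have "(A*B) $$ (\<mu>,\<nu>) = (\<Sum>p<d*d. \<sigma> \<mu> $$ (p div d, p mod d) * (\<sigma> \<nu> $$ (p mod d, p div d) / of_nat d))"
      using mn Ac Bc by (simp add: A_def B_def scalar_prod_def atLeast0LessThan power2_eq_square)
    also have "\<dots> = (\<Sum>i<d. \<Sum>j<d. \<sigma> \<mu> $$ (i,j) * (\<sigma> \<nu> $$ (j,i) / of_nat d))"
      by (simp add: sum_split_mult)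
    also have "\<dots> = mtrace (\<sigma> \<mu> * \<sigma> \<nu>) / of_nat d"
      using mtrace_mult[OF car[OF mn(1)] car[OF mn(2)]] by (simp add: sum_divide_distrib)
    also have "\<dots> = 1\<^sub>m (d^2) $$ (\<mu>,\<nu>)" using orth[OF mn] mn d0 by simp
    finally show "(A*B) $$ (\<mu>,\<nu>) = 1\<^sub>m (d^2) $$ (\<mu>,\<nu>)" .
  qed (use Ac Bc in auto)
  have BA: "B * A = 1\<^sub>m (d^2)" by (rule mat_mult_left_right_inverse[OF Ac Bc AB])
  define p where "p = y*d+x"
  define q where "q = a*d+b"
  have lt: "\<And>u v. u < d \<Longrightarrow> v < d \<Longrightarrow> u*d+v < d^2"
  proof -
    fix u v assume uv: "u < d" "v < d"
    have "u*d+v < (u+1)*d" using uv by simp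
    also have "(u+1)*d \<le> d*d" using uv by (intro mult_le_mono1) simp
    finally show "u*d+v < d^2" by (simp add: power2_eq_square)
  qed
  have pq: "p < d^2" "q < d^2" unfolding p_def q_def using xy lt by auto
  have "(B*A) $$ (p,q) = (\<Sum>\<nu><d^2. \<sigma> \<nu> $$ (x,y) / of_nat d * \<sigma> \<nu> $$ (a,b))"
    using pq Ac Bc xy by (simp add: A_def B_def scalar_prod_def atLeast0LessThan p_def q_def)
  also have "\<dots> = (\<Sum>\<nu><d^2. \<sigma> \<nu> $$ (x,y) * \<sigma> \<nu> $$ (a,b)) / of_nat d"
    by (simp add: sum_divide_distrib)
  finally have "(\<Sum>\<nu><d^2. \<sigma> \<nu> $$ (x,y) * \<sigma> \<nu> $$ (a,b)) / of_nat d = (if p = q then 1 else 0)"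
    using BA pq by simp
  moreover have "(p = q) = (x = b \<and> y = a)"
    unfolding p_def q_def using xy by (metis idx_div idx_mod)
  ultimately show ?thesis using d0 by (simp add: field_simps split: if_splits)
qed

definition ml :: "nat \<Rightarrow> nat set \<Rightarrow> ((nat \<Rightarrow> complex mat) \<Rightarrow> complex) \<Rightarrow> bool" where
  "ml d S G \<longleftrightarrow> (\<forall>X Y. (\<forall>j\<in>S. X j = Y j) \<longrightarrow> G X = G Y) \<and>
     (\<forall>X. (\<forall>j\<in>S. X j \<in> carrier_mat d d) \<longrightarrow> (\<forall>j\<in>S. lin d (\<lambda>A. G (X(j:=A)))))"

lemma ml_dep: "ml d S G \<Longrightarrow> (\<And>j. j \<in> S \<Longrightarrow> X j = Y j) \<Longrightarrow> G X = G Y"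
  unfolding ml_def by blast

lemma ml_lin: "ml d S G \<Longrightarrow> (\<And>j. j \<in> S \<Longrightarrow> X j \<in> carrier_mat d d) \<Longrightarrow> j \<in> S \<Longrightarrow> lin d (\<lambda>A. G (X(j:=A)))"
  unfolding ml_def by blast

lemma ml_fix:
  assumes G: "ml d (insert s S) G" and sS: "s \<notin> S" and B: "B \<in> carrier_mat d d"
  shows "ml d S (\<lambda>X. G (X(s:=B)))"
  unfolding ml_def
proof (intro conjI allI impI ballI)
  fix X Y :: "nat \<Rightarrow> complex mat" assume "\<forall>j\<in>S. X j = Y j"
  then show "G (X(s:=B)) = G (Y(s:=B))" by (intro ml_dep[OF G]) auto
next
  fix X :: "nat \<Rightarrow> complex mat" and j assume X: "\<forall>j\<in>S. X j \<in> carrier_mat d d" and j: "j \<in> S"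
  have "lin d (\<lambda>A. G ((X(s:=B))(j:=A)))" using X B j by (intro ml_lin[OF G]) auto
  moreover have "\<And>A. (X(s:=B))(j:=A) = (X(j:=A))(s:=B)" using j sS by (auto simp: fun_upd_twist)
  ultimately show "lin d (\<lambda>A. G ((X(j:=A))(s:=B)))" by simp
qed

lemma sum_PiE_insert:
  assumes "s \<notin> S"
  shows "(\<Sum>\<mu>\<in>PiE (insert s S) T. f \<mu>) = (\<Sum>\<nu>\<in>T s. \<Sum>\<mu>\<in>PiE S T. f (\<mu>(s:=\<nu>)))"
  unfolding PiE_insert_eq
  by (subst sum.reindex[OF inj_combinator[OF assms]]) (auto simp: sum.cartesian_product intro!: sum.cong)

lemma single_recon:
  assumes basis: "herm_op_basis d \<sigma>" and g: "lin d g" and xy: "x < d" "y < d"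
  shows "(\<Sum>\<nu><d^2. g (\<sigma> \<nu>) * \<sigma> \<nu> $$ (x,y)) = of_nat d * g (ket_bra d y x)"
proof -
  have car: "\<And>\<mu>. \<mu> < d^2 \<Longrightarrow> \<sigma> \<mu> \<in> carrier_mat d d"
    using basis unfolding herm_op_basis_def hermitian_def by auto
  have "(\<Sum>\<nu><d^2. g (\<sigma> \<nu>) * \<sigma> \<nu> $$ (x,y)) =
        (\<Sum>\<nu><d^2. \<Sum>s\<in>{..<d}\<times>{..<d}. g (ket_bra d (fst s) (snd s)) * (\<sigma> \<nu> $$ s * \<sigma> \<nu> $$ (x,y)))"
  proof (intro sum.cong refl)
    fix \<nu> assume "\<nu> \<in> {..<d^2}"
    then have "g (\<sigma> \<nu>) = (\<Sum>s\<in>{..<d}\<times>{..<d}. \<sigma> \<nu> $$ s * g (ket_bra d (fst s) (snd s)))"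
      using car by (intro lin_expand[OF g]) auto
    then show "g (\<sigma> \<nu>) * \<sigma> \<nu> $$ (x,y) = (\<Sum>s\<in>{..<d}\<times>{..<d}. g (ket_bra d (fst s) (snd s)) * (\<sigma> \<nu> $$ s * \<sigma> \<nu> $$ (x,y)))"
      by (simp add: sum_distrib_left sum_distrib_right mult_ac)
  qed
  also have "\<dots> = (\<Sum>s\<in>{..<d}\<times>{..<d}. g (ket_bra d (fst s) (snd s)) * (\<Sum>\<nu><d^2. \<sigma> \<nu> $$ s * \<sigma> \<nu> $$ (x,y)))"
    by (subst sum.swap) (simp add: sum_distrib_left)
  also have "\<dots> = (\<Sum>s\<in>{..<d}\<times>{..<d}. if s = (y,x) then of_nat d * g (ket_bra d y x) else 0)"
    using xy by (intro sum.cong refl) (auto simp: completeness[OF basis] split: if_split_asm)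
  also have "\<dots> = of_nat d * g (ket_bra d y x)" using xy by (subst sum.delta) auto
  finally show ?thesis .
qed

lemma recon:
  assumes basis: "herm_op_basis d \<sigma>" and fin: "finite S" and G: "ml d S G"
    and xy: "\<forall>j\<in>S. x j < d \<and> y j < d"
  shows "(\<Sum>\<mu>\<in>PiE S (\<lambda>_. {..<d^2}). G (\<lambda>j. \<sigma> (\<mu> j)) * (\<Prod>j\<in>S. \<sigma> (\<mu> j) $$ (x j, y j)))
     = of_nat d ^ card S * G (\<lambda>j. ket_bra d (y j) (x j))"
  using fin G xy
proof (induct S arbitrary: G rule: finite_induct)
  case empty
  have "G (\<lambda>j. \<sigma> undefined) = G (\<lambda>j. ket_bra d (y j) (x j))"
    by (rule ml_dep[OF empty.prems(1)]) auto
  then show ?case by simp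
next
  case (insert s S)
  have car: "\<And>\<mu>. \<mu> < d^2 \<Longrightarrow> \<sigma> \<mu> \<in> carrier_mat d d"
    using basis unfolding herm_op_basis_def hermitian_def by auto
  let ?K = "\<lambda>j. ket_bra d (y j) (x j)"
  have "(\<Sum>\<mu>\<in>PiE (insert s S) (\<lambda>_. {..<d^2}). G (\<lambda>j. \<sigma> (\<mu> j)) * (\<Prod>j\<in>insert s S. \<sigma> (\<mu> j) $$ (x j, y j)))
     = (\<Sum>\<nu><d^2. \<Sum>\<mu>\<in>PiE S (\<lambda>_. {..<d^2}). G (\<lambda>j. \<sigma> ((\<mu>(s:=\<nu>)) j)) * (\<Prod>j\<in>insert s S. \<sigma> ((\<mu>(s:=\<nu>)) j) $$ (x j, y j)))"
    by (rule sum_PiE_insert[OF insert.hyps(2)])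
  also have "\<dots> = (\<Sum>\<nu><d^2. \<sigma> \<nu> $$ (x s, y s) * (\<Sum>\<mu>\<in>PiE S (\<lambda>_. {..<d^2}). G ((\<lambda>j. \<sigma> (\<mu> j))(s := \<sigma> \<nu>)) * (\<Prod>j\<in>S. \<sigma> (\<mu> j) $$ (x j, y j))))"
  proof (intro sum.cong refl)
    fix \<nu>
    show "(\<Sum>\<mu>\<in>PiE S (\<lambda>_. {..<d^2}). G (\<lambda>j. \<sigma> ((\<mu>(s:=\<nu>)) j)) * (\<Prod>j\<in>insert s S. \<sigma> ((\<mu>(s:=\<nu>)) j) $$ (x j, y j)))
       = \<sigma> \<nu> $$ (x s, y s) * (\<Sum>\<mu>\<in>PiE S (\<lambda>_. {..<d^2}). G ((\<lambda>j. \<sigma> (\<mu> j))(s := \<sigma> \<nu>)) * (\<Prod>j\<in>S. \<sigma> (\<mu> j) $$ (x j, y j)))"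
      unfolding sum_distrib_left
    proof (intro sum.cong refl)
      fix \<mu>
      have e1: "(\<lambda>j. \<sigma> ((\<mu>(s:=\<nu>)) j)) = (\<lambda>j. \<sigma> (\<mu> j))(s := \<sigma> \<nu>)" by auto
      have e2: "(\<Prod>j\<in>S. \<sigma> ((\<mu>(s:=\<nu>)) j) $$ (x j, y j)) = (\<Prod>j\<in>S. \<sigma> (\<mu> j) $$ (x j, y j))"
        using insert.hyps(2) by (intro prod.cong refl) auto
      show "G (\<lambda>j. \<sigma> ((\<mu>(s:=\<nu>)) j)) * (\<Prod>j\<in>insert s S. \<sigma> ((\<mu>(s:=\<nu>)) j) $$ (x j, y j))
         = \<sigma> \<nu> $$ (x s, y s) * (G ((\<lambda>j. \<sigma> (\<mu> j))(s := \<sigma> \<nu>)) * (\<Prod>j\<in>S. \<sigma> (\<mu> j) $$ (x j, y j)))"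
        unfolding e1 using insert.hyps e2 by (simp add: mult_ac)
    qed
  qed
  also have "\<dots> = (\<Sum>\<nu><d^2. \<sigma> \<nu> $$ (x s, y s) * (of_nat d ^ card S * G (?K(s := \<sigma> \<nu>))))"
  proof (intro sum.cong refl)
    fix \<nu> assume "\<nu> \<in> {..<d^2}"
    then have "ml d S (\<lambda>X. G (X(s := \<sigma> \<nu>)))" using car insert by (intro ml_fix) auto
    then show "\<sigma> \<nu> $$ (x s, y s) * (\<Sum>\<mu>\<in>PiE S (\<lambda>_. {..<d^2}). G ((\<lambda>j. \<sigma> (\<mu> j))(s := \<sigma> \<nu>)) * (\<Prod>j\<in>S. \<sigma> (\<mu> j) $$ (x j, y j)))
       = \<sigma> \<nu> $$ (x s, y s) * (of_nat d ^ card S * G (?K(s := \<sigma> \<nu>)))"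
      using insert.hyps(3)[of "\<lambda>X. G (X(s := \<sigma> \<nu>))"] insert.prems by simp
  qed
  also have "\<dots> = of_nat d ^ card S * (\<Sum>\<nu><d^2. G (?K(s := \<sigma> \<nu>)) * \<sigma> \<nu> $$ (x s, y s))"
    by (simp add: sum_distrib_left mult_ac)
  also have "(\<Sum>\<nu><d^2. G (?K(s := \<sigma> \<nu>)) * \<sigma> \<nu> $$ (x s, y s)) = of_nat d * G (?K(s := ket_bra d (y s) (x s)))"
    using insert.prems by (intro single_recon[OF basis, where g = "\<lambda>A. G (?K(s := A))"] ml_lin) auto
  also have "?K(s := ket_bra d (y s) (x s)) = ?K" by auto
  finally show ?case using insert.hyps by simp
qed

lemma single_spec:
  assumes sd: "spectral_decomp d M A P" and M: "M \<in> carrier_mat d d" and g: "lin d g"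
  shows "(\<Sum>a\<in>A. of_real a * g (P a)) = g M"
proof -
  have Pc: "\<forall>a\<in>A. P a \<in> carrier_mat d d" using sd unfolding spectral_decomp_def hermitian_def by auto
  have "M = mat d d (\<lambda>ij. \<Sum>a\<in>A. of_real a * P a $$ ij)"
  proof (rule eq_matI)
    fix i j assume "i < dim_row (mat d d (\<lambda>ij. \<Sum>a\<in>A. of_real a * P a $$ ij))" "j < dim_col (mat d d (\<lambda>ij. \<Sum>a\<in>A. (of_real a :: complex) * P a $$ ij))"
    then show "M $$ (i,j) = mat d d (\<lambda>ij. \<Sum>a\<in>A. of_real a * P a $$ ij) $$ (i,j)"
      using sd unfolding spectral_decomp_def by auto
  qed (use M in auto)
  then have "g M = g (mat d d (\<lambda>ij. \<Sum>a\<in>A. of_real a * P a $$ ij))" by simp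
  also have "\<dots> = (\<Sum>a\<in>A. of_real a * g (P a))"
    using sd Pc unfolding spectral_decomp_def by (intro lin_sum[OF g]) auto
  finally show ?thesis by simp
qed

lemma spec_multi:
  assumes fin: "finite S" and G: "ml d S G"
    and sd: "\<forall>j\<in>S. spectral_decomp d (M j) (Sp j) (P j) \<and> M j \<in> carrier_mat d d"
  shows "(\<Sum>a\<in>PiE S Sp. (\<Prod>j\<in>S. complex_of_real (a j)) * G (\<lambda>j. P j (a j))) = G M"
  using fin G sd
proof (induct S arbitrary: G rule: finite_induct)
  case empty
  have "G (\<lambda>j. P j undefined) = G M" by (rule ml_dep[OF empty.prems(1)]) auto
  then show ?case by simp
next
  case (insert s S)
  have Pc: "\<And>a. a \<in> Sp s \<Longrightarrow> P s a \<in> carrier_mat d d"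
    using insert.prems unfolding spectral_decomp_def hermitian_def by auto
  have "(\<Sum>a\<in>PiE (insert s S) Sp. (\<Prod>j\<in>insert s S. complex_of_real (a j)) * G (\<lambda>j. P j (a j)))
     = (\<Sum>a0\<in>Sp s. \<Sum>b\<in>PiE S Sp. (\<Prod>j\<in>insert s S. complex_of_real ((b(s:=a0)) j)) * G (\<lambda>j. P j ((b(s:=a0)) j)))"
    by (rule sum_PiE_insert[OF insert.hyps(2)])
  also have "\<dots> = (\<Sum>a0\<in>Sp s. of_real a0 * (\<Sum>b\<in>PiE S Sp. (\<Prod>j\<in>S. complex_of_real (b j)) * G ((\<lambda>j. P j (b j))(s := P s a0))))"
  proof (intro sum.cong refl)
    fix a0
    show "(\<Sum>b\<in>PiE S Sp. (\<Prod>j\<in>insert s S. complex_of_real ((b(s:=a0)) j)) * G (\<lambda>j. P j ((b(s:=a0)) j)))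
      = of_real a0 * (\<Sum>b\<in>PiE S Sp. (\<Prod>j\<in>S. complex_of_real (b j)) * G ((\<lambda>j. P j (b j))(s := P s a0)))"
      unfolding sum_distrib_left
    proof (intro sum.cong refl)
      fix b
      have e1: "(\<lambda>j. P j ((b(s:=a0)) j)) = (\<lambda>j. P j (b j))(s := P s a0)" by auto
      have e2: "(\<Prod>j\<in>S. complex_of_real ((b(s:=a0)) j)) = (\<Prod>j\<in>S. complex_of_real (b j))"
        using insert.hyps(2) by (intro prod.cong refl) auto
      show "(\<Prod>j\<in>insert s S. complex_of_real ((b(s:=a0)) j)) * G (\<lambda>j. P j ((b(s:=a0)) j))
         = of_real a0 * ((\<Prod>j\<in>S. complex_of_real (b j)) * G ((\<lambda>j. P j (b j))(s := P s a0)))"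
        unfolding e1 using insert.hyps e2 by (simp add: mult_ac)
    qed
  qed
  also have "\<dots> = (\<Sum>a0\<in>Sp s. of_real a0 * G (M(s := P s a0)))"
  proof (intro sum.cong refl)
    fix a0 assume a0: "a0 \<in> Sp s"
    then have "ml d S (\<lambda>X. G (X(s := P s a0)))" using Pc insert by (intro ml_fix) auto
    then show "of_real a0 * (\<Sum>b\<in>PiE S Sp. (\<Prod>j\<in>S. complex_of_real (b j)) * G ((\<lambda>j. P j (b j))(s := P s a0)))
       = of_real a0 * G (M(s := P s a0))"
      using insert.hyps(3)[of "\<lambda>X. G (X(s := P s a0))"] insert.prems by simp
  qed
  also have "\<dots> = G (M(s := M s))"
    using insert.prems by (intro single_spec[where g = "\<lambda>A. G (M(s := A))"] ml_lin) auto
  finally show ?case by simp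
qed

lemma chain_dep: "(\<And>j. j \<le> k \<Longrightarrow> X j = Y j) \<Longrightarrow> kd_chain \<rho> E X k = kd_chain \<rho> E Y k"
  by (induct k) auto

lemma chain_car:
  assumes rho: "\<rho> \<in> carrier_mat d d" and linE: "\<forall>j. 1 \<le> j \<and> j \<le> n \<longrightarrow> linear_op_map d (E j)"
    and kn: "k \<le> n" and X: "\<And>j. j \<le> k \<Longrightarrow> X j \<in> carrier_mat d d"
  shows "kd_chain \<rho> E X k \<in> carrier_mat d d"
  using kn X
proof (induct k)
  case 0 then show ?case using rho by auto
next
  case (Suc k)
  then have "kd_chain \<rho> E X k \<in> carrier_mat d d" by auto
  moreover have "linear_op_map d (E (Suc k))" using linE Suc by auto
  ultimately have "E (Suc k) (kd_chain \<rho> E X k) \<in> carrier_mat d d" unfolding linear_op_map_def by auto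
  then show ?case using Suc by auto
qed

lemma chain_lin:
  assumes rho: "\<rho> \<in> carrier_mat d d" and linE: "\<forall>j. 1 \<le> j \<and> j \<le> n \<longrightarrow> linear_op_map d (E j)"
    and kn: "k \<le> n" and X: "\<And>j. j \<le> k \<Longrightarrow> X j \<in> carrier_mat d d" and jk: "j \<le> k"
    and A: "A \<in> carrier_mat d d" and B: "B \<in> carrier_mat d d"
  shows "kd_chain \<rho> E (X(j:=A+B)) k = kd_chain \<rho> E (X(j:=A)) k + kd_chain \<rho> E (X(j:=B)) k
       \<and> kd_chain \<rho> E (X(j:=c \<cdot>\<^sub>m A)) k = c \<cdot>\<^sub>m kd_chain \<rho> E (X(j:=A)) k"
  using kn X jk
proof (induct k)
  case 0
  then have j0: "j = 0" by auto
  show ?case using rho A B j0 by (simp add: mult_add_distrib_mat mult_smult_distrib)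
next
  case (Suc k)
  have Ek: "linear_op_map d (E (Suc k))" using linE Suc by auto
  show ?case
  proof (cases "j = Suc k")
    case True
    have same: "\<And>Z. kd_chain \<rho> E (X(j:=Z)) k = kd_chain \<rho> E X k"
      using True by (intro chain_dep) auto
    have Cc: "kd_chain \<rho> E X k \<in> carrier_mat d d"
      using Suc by (intro chain_car[OF rho linE]) auto
    then have ECc: "E (Suc k) (kd_chain \<rho> E X k) \<in> carrier_mat d d" using Ek unfolding linear_op_map_def by auto
    have ch: "\<And>Z. kd_chain \<rho> E (X(j:=Z)) (Suc k) = E (Suc k) (kd_chain \<rho> E X k) * Z"
      by (simp only: kd_chain.simps same) (simp add: True)
    show ?thesis unfolding ch using ECc A B by (simp add: mult_add_distrib_mat mult_smult_distrib)
  next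
    case False
    then have jk: "j \<le> k" using Suc by auto
    have IH: "kd_chain \<rho> E (X(j:=A+B)) k = kd_chain \<rho> E (X(j:=A)) k + kd_chain \<rho> E (X(j:=B)) k"
       "kd_chain \<rho> E (X(j:=c \<cdot>\<^sub>m A)) k = c \<cdot>\<^sub>m kd_chain \<rho> E (X(j:=A)) k"
    proof -
      have kn': "k \<le> n" using Suc.prems by auto
      have Xk: "\<And>j. j \<le> k \<Longrightarrow> X j \<in> carrier_mat d d" using Suc.prems by auto
      show "kd_chain \<rho> E (X(j:=A+B)) k = kd_chain \<rho> E (X(j:=A)) k + kd_chain \<rho> E (X(j:=B)) k"
        "kd_chain \<rho> E (X(j:=c \<cdot>\<^sub>m A)) k = c \<cdot>\<^sub>m kd_chain \<rho> E (X(j:=A)) k"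
        using Suc.hyps[OF kn' Xk jk] by blast+
    qed
    have CA: "kd_chain \<rho> E (X(j:=A)) k \<in> carrier_mat d d"
      using Suc A by (intro chain_car[OF rho linE]) auto
    have CB: "kd_chain \<rho> E (X(j:=B)) k \<in> carrier_mat d d"
      using Suc B by (intro chain_car[OF rho linE]) auto
    have ECA: "E (Suc k) (kd_chain \<rho> E (X(j:=A)) k) \<in> carrier_mat d d"
      using Ek CA unfolding linear_op_map_def by auto
    have ECB: "E (Suc k) (kd_chain \<rho> E (X(j:=B)) k) \<in> carrier_mat d d"
      using Ek CB unfolding linear_op_map_def by auto
    have Xs: "X (Suc k) \<in> carrier_mat d d" using Suc by auto
    have E1: "E (Suc k) (kd_chain \<rho> E (X(j:=A)) k + kd_chain \<rho> E (X(j:=B)) k)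
       = E (Suc k) (kd_chain \<rho> E (X(j:=A)) k) + E (Suc k) (kd_chain \<rho> E (X(j:=B)) k)"
      using Ek CA CB unfolding linear_op_map_def by auto
    have E2: "E (Suc k) (c \<cdot>\<^sub>m kd_chain \<rho> E (X(j:=A)) k) = c \<cdot>\<^sub>m E (Suc k) (kd_chain \<rho> E (X(j:=A)) k)"
      using Ek CA unfolding linear_op_map_def by auto
    have ne: "Suc k \<noteq> j" using False by auto
    have ch2: "\<And>Z. kd_chain \<rho> E (X(j:=Z)) (Suc k) = E (Suc k) (kd_chain \<rho> E (X(j:=Z)) k) * X (Suc k)"
      by (simp only: kd_chain.simps fun_upd_other[OF ne])
    show ?thesis unfolding ch2 IH E1 E2 using ECA ECB Xs
      by (simp del: fun_upd_apply add: add_mult_distrib_mat mult_smult_assoc_mat)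
  qed
qed

lemma mtrace_add: "(A :: complex mat) \<in> carrier_mat d d \<Longrightarrow> B \<in> carrier_mat d d \<Longrightarrow> mtrace (A+B) = mtrace A + mtrace B"
  by (simp add: mtrace_def sum.distrib)
lemma mtrace_smult: "(A :: complex mat) \<in> carrier_mat d d \<Longrightarrow> mtrace (c \<cdot>\<^sub>m A) = c * mtrace A"
  by (simp add: mtrace_def sum_distrib_left)

lemma chain_ml:
  assumes rho: "\<rho> \<in> carrier_mat d d" and linE: "\<forall>j. 1 \<le> j \<and> j \<le> n \<longrightarrow> linear_op_map d (E j)"
    and kn: "k \<le> n"
  shows "ml d {..k} (\<lambda>X. mtrace (kd_chain \<rho> E X k))"
  unfolding ml_def
proof (intro conjI allI impI ballI)
  fix X Y :: "nat \<Rightarrow> complex mat" assume "\<forall>j\<in>{..k}. X j = Y j"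
  then show "mtrace (kd_chain \<rho> E X k) = mtrace (kd_chain \<rho> E Y k)" by (subst chain_dep) auto
next
  fix X :: "nat \<Rightarrow> complex mat" and j assume X: "\<forall>j\<in>{..k}. X j \<in> carrier_mat d d" and j: "j \<in> {..k}"
  have XA: "\<And>A. A \<in> carrier_mat d d \<Longrightarrow> kd_chain \<rho> E (X(j:=A)) k \<in> carrier_mat d d"
    using X by (intro chain_car[OF rho linE kn]) auto
  show "lin d (\<lambda>A. mtrace (kd_chain \<rho> E (X(j := A)) k))"
    unfolding lin_def
  proof (intro conjI allI ballI)
    fix A B :: "complex mat" assume A: "A \<in> carrier_mat d d" and B: "B \<in> carrier_mat d d"
    show "mtrace (kd_chain \<rho> E (X(j := A + B)) k) = mtrace (kd_chain \<rho> E (X(j := A)) k) + mtrace (kd_chain \<rho> E (X(j := B)) k)"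
      using chain_lin[OF rho linE kn _ _ A B, of X j] X j XA[OF A] XA[OF B] by (auto intro: mtrace_add)
  next
    fix c and A :: "complex mat" assume A: "A \<in> carrier_mat d d"
    show "mtrace (kd_chain \<rho> E (X(j := c \<cdot>\<^sub>m A)) k) = c * mtrace (kd_chain \<rho> E (X(j := A)) k)"
      using chain_lin[OF rho linE kn _ _ A A, of X j c] X j XA[OF A] by (auto intro: mtrace_smult)
  qed
qed

lemma mod_div_aux: "(a::nat) > 0 \<Longrightarrow> (I mod (a * q)) div a = I div a mod q"
  by (simp add: mod_mult2_eq div_less)
lemma digit_mod: assumes "j < m" "(d::nat) > 0" shows "(I mod d^m) div d^j mod d = I div d^j mod d"
proof -
  have e: "d^m = d^j * d^(m-j)" using assms by (simp add: power_add[symmetric])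
  have "d dvd d^(m-j)" using assms by simp
  then show ?thesis unfolding e using assms by (simp add: mod_div_aux mod_mod_cancel)
qed

lemma top_digit: "(I::nat) < d^(Suc k) \<Longrightarrow> I div d^k mod d = I div d^k"
  by (simp add: less_mult_imp_div_less mult.commute)

lemma tens_entry:
  assumes f: "\<And>j. j \<le> k \<Longrightarrow> f j \<in> carrier_mat d d" and d0: "d > 0"
  shows "tens k f \<in> carrier_mat (d^(k+1)) (d^(k+1)) \<and>
    (\<forall>I J. I < d^(k+1) \<longrightarrow> J < d^(k+1) \<longrightarrow>
       tens k f $$ (I,J) = (\<Prod>j\<le>k. f j $$ (I div d^j mod d, J div d^j mod d)))"
  using f
proof (induct k)
  case 0
  then show ?case by auto
next
  case (Suc k)
  have IH: "tens k f \<in> carrier_mat (d^(k+1)) (d^(k+1))"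
     "\<And>I J. I < d^(k+1) \<Longrightarrow> J < d^(k+1) \<Longrightarrow>
       tens k f $$ (I,J) = (\<Prod>j\<le>k. f j $$ (I div d^j mod d, J div d^j mod d))"
    using Suc by auto
  have fS: "f (Suc k) \<in> carrier_mat d d" using Suc by auto
  have car: "tens (Suc k) f \<in> carrier_mat (d^(Suc k+1)) (d^(Suc k+1))"
    using IH(1) fS by (simp add: kron_def)
  moreover have "tens (Suc k) f $$ (I,J) = (\<Prod>j\<le>Suc k. f j $$ (I div d^j mod d, J div d^j mod d))"
    if IJ: "I < d^(Suc k+1)" "J < d^(Suc k+1)" for I J
  proof -
    have IJ': "I < d * d^(k+1)" "J < d * d^(k+1)" using IJ by auto
    have "tens (Suc k) f $$ (I,J) = f (Suc k) $$ (I div d^(k+1), J div d^(k+1)) * tens k f $$ (I mod d^(k+1), J mod d^(k+1))"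
      using IH(1) fS IJ' by (simp add: kron_def)
    also have "tens k f $$ (I mod d^(k+1), J mod d^(k+1)) = (\<Prod>j\<le>k. f j $$ (I div d^j mod d, J div d^j mod d))"
    proof -
      have "tens k f $$ (I mod d^(k+1), J mod d^(k+1)) = (\<Prod>j\<le>k. f j $$ ((I mod d^(k+1)) div d^j mod d, (J mod d^(k+1)) div d^j mod d))"
        using d0 by (intro IH(2)) auto
      also have "\<dots> = (\<Prod>j\<le>k. f j $$ (I div d^j mod d, J div d^j mod d))"
      proof (intro prod.cong refl)
        fix j assume "j \<in> {..k}"
        then show "f j $$ ((I mod d^(k+1)) div d^j mod d, (J mod d^(k+1)) div d^j mod d) = f j $$ (I div d^j mod d, J div d^j mod d)"
          using digit_mod[of j "k+1" d I] digit_mod[of j "k+1" d J] d0 by simp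
      qed
      finally show ?thesis .
    qed
    also have "I div d^(k+1) = I div d^(Suc k) mod d" using IJ top_digit[of I d "Suc k"] by simp
    also have "J div d^(k+1) = J div d^(Suc k) mod d" using IJ top_digit[of J d "Suc k"] by simp
    finally show ?thesis by (simp add: mult.commute)
  qed
  ultimately show ?case by blast
qed

lemma kd_state_entry:
  assumes basis: "herm_op_basis d \<sigma>" and spec: "\<forall>\<mu> < d^2. spectral_decomp d (\<sigma> \<mu>) (Spec \<mu>) (SP \<mu>)"
    and rho: "\<rho> \<in> carrier_mat d d" and linE: "\<forall>j. 1 \<le> j \<and> j \<le> n \<longrightarrow> linear_op_map d (E j)"
    and kn: "k \<le> n" and IJ: "I < d^(k+1)" "J < d^(k+1)"
  shows "kd_state d \<sigma> \<rho> E Spec SP k $$ (I,J) =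
     mtrace (kd_chain \<rho> E (\<lambda>j. ket_bra d (J div d^j mod d) (I div d^j mod d)) k)"
proof -
  have d0: "d > 0" using IJ by (cases d) auto
  have car: "\<And>\<mu>. \<mu> < d^2 \<Longrightarrow> \<sigma> \<mu> \<in> carrier_mat d d"
    using basis unfolding herm_op_basis_def hermitian_def by auto
  let ?G = "\<lambda>X. mtrace (kd_chain \<rho> E X k)"
  have G: "ml d {..k} ?G" by (rule chain_ml[OF rho linE kn])
  have "(\<Sum>\<mu> \<in> PiE {..k} (\<lambda>_. {..<d^2}). kd_T \<rho> E Spec SP k \<mu> * tens k (\<lambda>j. \<sigma> (\<mu> j)) $$ (I,J))
     = (\<Sum>\<mu> \<in> PiE {..k} (\<lambda>_. {..<d^2}). ?G (\<lambda>j. \<sigma> (\<mu> j)) * (\<Prod>j\<in>{..k}. \<sigma> (\<mu> j) $$ (I div d^j mod d, J div d^j mod d)))"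
  proof (intro sum.cong refl)
    fix \<mu> assume \<mu>: "\<mu> \<in> PiE {..k} (\<lambda>_. {..<d^2})"
    have mu: "\<And>j. j \<le> k \<Longrightarrow> \<mu> j < d^2" using \<mu> by auto
    have "kd_T \<rho> E Spec SP k \<mu> = ?G (\<lambda>j. \<sigma> (\<mu> j))"
      unfolding kd_T_def kd_right_def
      by (rule spec_multi[OF _ G]) (use spec mu car in auto)
    moreover have "tens k (\<lambda>j. \<sigma> (\<mu> j)) $$ (I,J) = (\<Prod>j\<in>{..k}. \<sigma> (\<mu> j) $$ (I div d^j mod d, J div d^j mod d))"
      using tens_entry[of k "\<lambda>j. \<sigma> (\<mu> j)" d] mu car d0 IJ by auto
    ultimately show "kd_T \<rho> E Spec SP k \<mu> * tens k (\<lambda>j. \<sigma> (\<mu> j)) $$ (I,J)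
      = ?G (\<lambda>j. \<sigma> (\<mu> j)) * (\<Prod>j\<in>{..k}. \<sigma> (\<mu> j) $$ (I div d^j mod d, J div d^j mod d))" by simp
  qed
  also have "\<dots> = of_nat d ^ card {..k} * ?G (\<lambda>j. ket_bra d (J div d^j mod d) (I div d^j mod d))"
    using d0 by (intro recon[OF basis _ G]) auto
  finally show ?thesis using IJ d0 unfolding kd_state_def by (simp add: of_nat_power)
qed

lemma mtrace_kb:
  assumes A: "A \<in> carrier_mat d d" and ab: "a < d" "b < d"
  shows "mtrace (A * ket_bra d a b) = A $$ (b,a)"
proof -
  have "mtrace (A * ket_bra d a b) = (\<Sum>i<d. \<Sum>j<d. A$$(i,j) * ket_bra d a b $$(j,i))"
    by (rule mtrace_mult[OF A ket_bra_carrier])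
  also have "\<dots> = (\<Sum>i<d. if i = b then A $$ (i,a) else 0)"
    using ab by (intro sum.cong refl) (auto simp: if_distrib cong: if_cong)
  also have "\<dots> = A $$ (b,a)" using ab by simp
  finally show ?thesis .
qed

definition pre :: "complex mat \<Rightarrow> (nat \<Rightarrow> complex mat \<Rightarrow> complex mat) \<Rightarrow> (nat \<Rightarrow> complex mat) \<Rightarrow> nat \<Rightarrow> complex mat" where
  "pre \<rho> E X m = (if m = 0 then \<rho> else E m (kd_chain \<rho> E X (m-1)))"

lemma chain_pre: "kd_chain \<rho> E X m = pre \<rho> E X m * X m"
  by (cases m) (auto simp: pre_def)

lemma pre_dep:
  assumes "\<And>j. j < m \<Longrightarrow> X j = Y j" shows "pre \<rho> E X m = pre \<rho> E Y m"
proof (cases m)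
  case (Suc m')
  have "kd_chain \<rho> E X m' = kd_chain \<rho> E Y m'" using assms Suc by (intro chain_dep) auto
  then show ?thesis using Suc by (simp add: pre_def)
qed (simp add: pre_def)

lemma pre_car:
  assumes rho: "\<rho> \<in> carrier_mat d d" and linE: "\<forall>j. 1 \<le> j \<and> j \<le> n \<longrightarrow> linear_op_map d (E j)"
    and mn: "m \<le> n" and X: "\<And>j. j < m \<Longrightarrow> X j \<in> carrier_mat d d"
  shows "pre \<rho> E X m \<in> carrier_mat d d"
proof (cases m)
  case 0 then show ?thesis using rho by (simp add: pre_def)
next
  case (Suc m')
  have "kd_chain \<rho> E X m' \<in> carrier_mat d d"
    using Suc mn X by (intro chain_car[OF rho linE]) auto
  moreover have "linear_op_map d (E m)" using linE Suc mn by auto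
  ultimately show ?thesis using Suc unfolding pre_def linear_op_map_def by auto
qed

lemma digit_low:
  assumes "j < m" "(d::nat) > 0" "t < d^m"
  shows "(l*d^m + t) div d^j mod d = t div d^j mod d"
proof -
  obtain r where r: "m = Suc (j + r)" using assms(1) less_iff_Suc_add by auto
  have e: "l*d^m = (l*d^r*d)*d^j" unfolding r by (simp add: power_add mult_ac)
  have "(l*d^m + t) div d^j = l*d^r*d + t div d^j"
    unfolding e using assms by simp
  then show ?thesis by simp
qed

lemma jam_entry:
  assumes Ek: "linear_op_map d Ek" and xy: "x < d*d" "y < d*d"
  shows "jamiolkowski d Ek $$ (x,y) = Ek (ket_bra d (y mod d) (x mod d)) $$ (x div d, y div d)"
proof -
  have d0: "d > 0" using xy by (cases d) auto
  have car: "\<And>a b. Ek (ket_bra d a b) \<in> carrier_mat d d" using Ek unfolding linear_op_map_def by auto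
  have dims: "\<And>a b. dim_row (Ek (ket_bra d a b)) = d" "\<And>a b. dim_col (Ek (ket_bra d a b)) = d"
    using car by auto
  have xm: "x mod d < d" "y mod d < d" using d0 by auto
  have xd: "x div d < d" "y div d < d" using xy by (auto simp: less_mult_imp_div_less)
  have "jamiolkowski d Ek $$ (x,y) = (\<Sum>k<d. \<Sum>l<d. Ek (ket_bra d k l) $$ (x div d, y div d) * ket_bra d l k $$ (x mod d, y mod d))"
    using xy car by (simp add: jamiolkowski_def kron_def dims)
  also have "\<dots> = (\<Sum>k<d. if k = y mod d then Ek (ket_bra d k (x mod d)) $$ (x div d, y div d) else 0)"
  proof (intro sum.cong refl)
    fix k assume "k \<in> {..<d}"
    have "(\<Sum>l<d. Ek (ket_bra d k l) $$ (x div d, y div d) * ket_bra d l k $$ (x mod d, y mod d))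
       = (\<Sum>l<d. if l = x mod d then (if k = y mod d then Ek (ket_bra d k l) $$ (x div d, y div d) else 0) else 0)"
      using xm by (intro sum.cong refl) auto
    also have "\<dots> = (if k = y mod d then Ek (ket_bra d k (x mod d)) $$ (x div d, y div d) else 0)"
      using xm by (subst sum.delta) auto
    finally show "(\<Sum>l<d. Ek (ket_bra d k l) $$ (x div d, y div d) * ket_bra d l k $$ (x mod d, y mod d))
       = (if k = y mod d then Ek (ket_bra d k (x mod d)) $$ (x div d, y div d) else 0)" .
  qed
  also have "\<dots> = Ek (ket_bra d (y mod d) (x mod d)) $$ (x div d, y div d)"
    using xm by (subst sum.delta) auto
  finally show ?thesis .
qed

lemma lin_entry:
  assumes Ek: "linear_op_map d Ek" and xy: "x < d" "y < d"
  shows "lin d (\<lambda>A. Ek A $$ (x,y))"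
  using assms unfolding lin_def linear_op_map_def by auto

lemma mult_kb_expand:
  assumes P: "P \<in> carrier_mat d d" and ab: "a < d" "b < d"
  shows "P * ket_bra d a b = mat d d (\<lambda>ij. \<Sum>l\<in>{..<d}. P $$ (l,a) * ket_bra d l b $$ ij)"
proof (rule eq_matI)
  fix i j assume ij: "i < dim_row (mat d d (\<lambda>ij. \<Sum>l\<in>{..<d}. P $$ (l,a) * ket_bra d l b $$ ij))"
    "j < dim_col (mat d d (\<lambda>ij. \<Sum>l\<in>{..<d}. P $$ (l,a) * ket_bra d l b $$ ij))"
  then have ij': "i < d" "j < d" by auto
  have "(P * ket_bra d a b) $$ (i,j) = (\<Sum>t<d. P $$ (i,t) * ket_bra d a b $$ (t,j))"
    using P ij' by (simp add: scalar_prod_def atLeast0LessThan carrier_matD)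
  also have "\<dots> = (\<Sum>t<d. if t = a then (if j = b then P $$ (i,t) else 0) else 0)"
    using ij' by (intro sum.cong refl) auto
  also have "\<dots> = (if j = b then P $$ (i,a) else 0)" using ab by (subst sum.delta) auto
  also have "\<dots> = (\<Sum>l<d. if l = i then (if j = b then P $$ (l,a) else 0) else 0)"
    using ij' by (subst sum.delta) auto
  also have "\<dots> = (\<Sum>l\<in>{..<d}. P $$ (l,a) * ket_bra d l b $$ (i,j))"
    using ij' by (intro sum.cong refl) auto
  finally show "(P * ket_bra d a b) $$ (i,j) = mat d d (\<lambda>ij. \<Sum>l\<in>{..<d}. P $$ (l,a) * ket_bra d l b $$ ij) $$ (i,j)"
    using ij' by simp
qed (use P in auto)

lemma lt_aux: "(u::nat) < d \<Longrightarrow> v < D \<Longrightarrow> u*D+v < d*D"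
proof -
  assume uv: "u < d" "v < D"
  have "u*D+v < (u+1)*D" using uv by simp
  also have "(u+1)*D \<le> d*D" using uv by (intro mult_le_mono1) simp
  finally show ?thesis .
qed

lemma star_step:
  assumes basis: "herm_op_basis d \<sigma>" and spec: "\<forall>\<mu> < d^2. spectral_decomp d (\<sigma> \<mu>) (Spec \<mu>) (SP \<mu>)"
    and rho: "\<rho> \<in> carrier_mat d d" and linE: "\<forall>j. 1 \<le> j \<and> j \<le> n \<longrightarrow> linear_op_map d (E j)"
    and mn: "Suc m \<le> n" and d0: "d > 0"
  shows "kd_state d \<sigma> \<rho> E Spec SP (Suc m) = star d (jamiolkowski d (E (Suc m))) (kd_state d \<sigma> \<rho> E Spec SP m)"
proof -
  define D where "D = d^m"
  define U where "U = kd_state d \<sigma> \<rho> E Spec SP m"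
  define Jm where "Jm = jamiolkowski d (E (Suc m))"
  have Ek: "linear_op_map d (E (Suc m))" using linE mn by auto
  have D0: "D > 0" unfolding D_def using d0 by simp
  have Uc: "U \<in> carrier_mat (d*D) (d*D)" unfolding U_def kd_state_def D_def by simp
  have Jc: "Jm \<in> carrier_mat (d*d) (d*d)" unfolding Jm_def jamiolkowski_def by simp
  have starE: "star d Jm U = kron Jm (1\<^sub>m D) * kron (1\<^sub>m d) U"
    unfolding star_def using Uc Jc d0 by simp
  have K1: "kron Jm (1\<^sub>m D) \<in> carrier_mat (d*d*D) (d*d*D)" using Jc by (simp add: kron_def)
  have K2: "kron (1\<^sub>m d) U \<in> carrier_mat (d*(d*D)) (d*(d*D))" using Uc by (simp add: kron_def)
  have LHSc: "kd_state d \<sigma> \<rho> E Spec SP (Suc m) \<in> carrier_mat (d*(d*D)) (d*(d*D))"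
    unfolding kd_state_def D_def by simp
  have Sc: "star d Jm U \<in> carrier_mat (d*(d*D)) (d*(d*D))"
    unfolding starE using K1 K2 by (simp add: mult.assoc)
  have main: "kd_state d \<sigma> \<rho> E Spec SP (Suc m) $$ (I,K) = star d Jm U $$ (I,K)"
    if IK: "I < d*(d*D)" "K < d*(d*D)" for I K
  proof -
    define a0 where "a0 = K div (d*D)"
    define t0 where "t0 = I mod D"
    have a0d: "a0 < d" unfolding a0_def using IK by (simp add: less_mult_imp_div_less mult.commute)
    have t0D: "t0 < D" unfolding t0_def using D0 by simp
    have dSm: "d^(Suc m) = d*D" unfolding D_def by simp
    have dSSm: "d^(Suc (Suc m)) = d*(d*D)" unfolding D_def by simp
    let ?f = "\<lambda>L. (Jm $$ (I div D, L div D) * (if I mod D = L mod D then 1 else 0)) *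
               ((if L div (d*D) = K div (d*D) then 1 else 0) * U $$ (L mod (d*D), K mod (d*D)))"
    have "star d Jm U $$ (I,K) = (\<Sum>L<d*(d*D). kron Jm (1\<^sub>m D) $$ (I,L) * kron (1\<^sub>m d) U $$ (L,K))"
      unfolding starE using K1 K2 IK by (simp add: scalar_prod_def atLeast0LessThan mult.assoc)
    also have "\<dots> = (\<Sum>L<d*(d*D). ?f L)"
    proof (intro sum.cong refl)
      fix L assume "L \<in> {..<d*(d*D)}"
      then have L: "L < d*(d*D)" by simp
      have "kron Jm (1\<^sub>m D) $$ (I,L) = Jm $$ (I div D, L div D) * (if I mod D = L mod D then 1 else 0)"
        using Jc IK L D0 by (simp add: kron_def mult.assoc)
      moreover have "kron (1\<^sub>m d) U $$ (L,K) = (if L div (d*D) = K div (d*D) then 1 else 0) * U $$ (L mod (d*D), K mod (d*D))"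
        using Uc IK L D0 d0 by (simp add: kron_def less_mult_imp_div_less mult.commute)
      ultimately show "kron Jm (1\<^sub>m D) $$ (I,L) * kron (1\<^sub>m d) U $$ (L,K) = ?f L" by simp
    qed
    also have "\<dots> = (\<Sum>a<d. \<Sum>l<d. \<Sum>t<D. ?f (a*(d*D) + (l*D+t)))"
      by (simp only: sum_split_mult[of _ d "d*D"] sum_split_mult[of _ d D])
    also have "\<dots> = (\<Sum>a<d. \<Sum>l<d. \<Sum>t<D. if a = a0 then (if t = t0 then
          Jm $$ (I div D, a0*d+l) * U $$ (l*D+t0, K mod (d*D)) else 0) else 0)"
    proof (intro sum.cong refl)
      fix a l t assume "a \<in> {..<d}" "l \<in> {..<d}" "t \<in> {..<D}"
      then have alt: "a < d" "l < d" "t < D" by auto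
      have lt: "l*D+t < d*D" using alt by (intro lt_aux)
      have eq1: "a*(d*D) + (l*D+t) = (a*d+l)*D + t" by (simp add: algebra_simps)
      have "(a*(d*D) + (l*D+t)) div D = a*d+l" unfolding eq1 using alt by simp
      moreover have "(a*(d*D) + (l*D+t)) mod D = t" unfolding eq1 using alt by simp
      moreover have "(a*(d*D) + (l*D+t)) div (d*D) = a" using lt by (simp add: idx_div)
      moreover have "(a*(d*D) + (l*D+t)) mod (d*D) = l*D+t" using lt by (simp add: idx_mod)
      ultimately show "?f (a*(d*D) + (l*D+t)) = (if a = a0 then (if t = t0 then
          Jm $$ (I div D, a0*d+l) * U $$ (l*D+t0, K mod (d*D)) else 0) else 0)"
        unfolding a0_def t0_def by auto
    qed
    also have "\<dots> = (\<Sum>a<d. if a = a0 then (\<Sum>l<d. \<Sum>t<D. if t = t0 then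
          Jm $$ (I div D, a0*d+l) * U $$ (l*D+t0, K mod (d*D)) else 0) else 0)"
      by (intro sum.cong refl) simp
    also have "\<dots> = (\<Sum>l<d. Jm $$ (I div D, a0*d+l) * U $$ (l*D+t0, K mod (d*D)))"
      using a0d t0D by simp
    finally have R: "star d Jm U $$ (I,K) = (\<Sum>l<d. Jm $$ (I div D, a0*d+l) * U $$ (l*D+t0, K mod (d*D)))" .

    define Xs where "Xs = (\<lambda>j. ket_bra d (K div d^j mod d) (I div d^j mod d))"
    define P where "P = pre \<rho> E Xs m"
    have Pc: "P \<in> carrier_mat d d" unfolding P_def using mn
      by (intro pre_car[OF rho linE]) (auto simp: Xs_def)
    have digs: "\<And>j. K div d^j mod d < d" "\<And>j. I div d^j mod d < d" using d0 by auto
    have Isuc: "I div d^(Suc m) mod d = I div D div d"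
    proof -
      have e1: "I div D div d = I div (D*d)" by (simp add: div_mult2_eq)
      have e2: "D*d = d^(Suc m)" by (simp add: D_def)
      have "I < d^(Suc (Suc m))" using IK by (simp add: D_def)
      then have e3: "I div d^(Suc m) mod d = I div d^(Suc m)" by (rule top_digit)
      show ?thesis unfolding e1 e2 e3 ..
    qed
    have Ksuc: "K div d^(Suc m) mod d = a0"
    proof -
      have "K < d^(Suc (Suc m))" using IK by (simp add: D_def)
      then have "K div d^(Suc m) mod d = K div d^(Suc m)" by (rule top_digit)
      then show ?thesis unfolding a0_def dSm .
    qed
    have ImD: "I div d^m mod d = I div D mod d" by (simp add: D_def)
    have Cc: "kd_chain \<rho> E Xs m \<in> carrier_mat d d"
      using mn by (intro chain_car[OF rho linE]) (auto simp: Xs_def)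
    have ECc: "E (Suc m) (kd_chain \<rho> E Xs m) \<in> carrier_mat d d" using Ek Cc unfolding linear_op_map_def by auto
    have "kd_state d \<sigma> \<rho> E Spec SP (Suc m) $$ (I,K) = mtrace (kd_chain \<rho> E Xs (Suc m))"
      unfolding Xs_def using IK dSSm by (intro kd_state_entry[OF basis spec rho linE mn]) auto
    also have "\<dots> = E (Suc m) (kd_chain \<rho> E Xs m) $$ (I div d^(Suc m) mod d, K div d^(Suc m) mod d)"
    proof -
      have "kd_chain \<rho> E Xs (Suc m) = E (Suc m) (kd_chain \<rho> E Xs m) * ket_bra d (K div d^(Suc m) mod d) (I div d^(Suc m) mod d)"
        by (simp only: kd_chain.simps) (simp only: Xs_def)
      then show ?thesis using mtrace_kb[OF ECc digs(1)[of "Suc m"] digs(2)[of "Suc m"]] by (simp only:)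
    qed
    also have "kd_chain \<rho> E Xs m = P * ket_bra d (K div d^m mod d) (I div d^m mod d)"
      unfolding P_def by (subst chain_pre) (simp add: Xs_def)
    also have "\<dots> = mat d d (\<lambda>ij. \<Sum>l\<in>{..<d}. P $$ (l, K div d^m mod d) * ket_bra d l (I div d^m mod d) $$ ij)"
      by (rule mult_kb_expand[OF Pc digs(1) digs(2)])
    also have "E (Suc m) \<dots> $$ (I div d^(Suc m) mod d, K div d^(Suc m) mod d)
       = (\<Sum>l\<in>{..<d}. P $$ (l, K div d^m mod d) * E (Suc m) (ket_bra d l (I div d^m mod d)) $$ (I div d^(Suc m) mod d, K div d^(Suc m) mod d))"
      by (rule lin_sum[OF lin_entry[OF Ek digs(2) digs(1)]]) auto
    also have "\<dots> = (\<Sum>l<d. Jm $$ (I div D, a0*d+l) * U $$ (l*D+t0, K mod (d*D)))"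
    proof (intro sum.cong refl)
      fix l assume "l \<in> {..<d}"
      then have l: "l < d" by simp
      have IdD: "I div D < d*d" using IK by (simp add: less_mult_imp_div_less mult.assoc)
      have a0l: "a0*d+l < d*d" using a0d l by (intro lt_aux)
      have J1: "Jm $$ (I div D, a0*d+l) = E (Suc m) (ket_bra d l (I div D mod d)) $$ (I div D div d, a0)"
        unfolding Jm_def using jam_entry[OF Ek IdD a0l] l by simp
      have lD: "l*D+t0 < d^(m+1)" using lt_aux[OF l t0D] by (simp add: dSm[symmetric])
      have KdD: "K mod (d*D) < d^(m+1)" using dSm d0 D0 by simp
      define Y where "Y = (\<lambda>j. ket_bra d ((K mod (d*D)) div d^j mod d) ((l*D+t0) div d^j mod d))"
      have "U $$ (l*D+t0, K mod (d*D)) = mtrace (kd_chain \<rho> E Y m)"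
        unfolding U_def Y_def using mn by (intro kd_state_entry[OF basis spec rho linE _ lD KdD]) auto
      also have "\<dots> = mtrace (pre \<rho> E Y m * Y m)" by (simp add: chain_pre)
      also have "pre \<rho> E Y m = P"
        unfolding P_def
      proof (rule pre_dep)
        fix j assume j: "j < m"
        have "(K mod (d*D)) div d^j mod d = K div d^j mod d"
          using digit_mod[of j "Suc m" d K] j d0 dSm by simp
        moreover have "(l*D+t0) div d^j mod d = I div d^j mod d"
          using digit_low[of j m d t0 l] digit_mod[of j m d I] j d0 t0D unfolding D_def t0_def by simp
        ultimately show "Y j = Xs j" unfolding Y_def Xs_def by simp
      qed
      also have "Y m = ket_bra d (K div d^m mod d) l"
      proof -
        have "(K mod (d*D)) div d^m mod d = K div d^m mod d"
          using digit_mod[of m "Suc m" d K] d0 dSm by simp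
        moreover have "(l*D+t0) div d^m mod d = l" using t0D l unfolding D_def by simp
        ultimately show ?thesis unfolding Y_def by simp
      qed
      also have "mtrace (P * ket_bra d (K div d^m mod d) l) = P $$ (l, K div d^m mod d)"
        by (rule mtrace_kb[OF Pc digs(1) l])
      finally have U1: "U $$ (l*D+t0, K mod (d*D)) = P $$ (l, K div d^m mod d)" .
      show "P $$ (l, K div d^m mod d) * E (Suc m) (ket_bra d l (I div d^m mod d)) $$ (I div d^(Suc m) mod d, K div d^(Suc m) mod d)
         = Jm $$ (I div D, a0*d+l) * U $$ (l*D+t0, K mod (d*D))"
        unfolding U1 J1 Isuc Ksuc ImD by simp
    qed
    also have "\<dots> = star d Jm U $$ (I,K)" using R by simp
    finally show ?thesis .
  qed
  show ?thesis
    unfolding U_def[symmetric] Jm_def[symmetric]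
    by (rule eq_matI) (use main LHSc Sc in auto)
qed

theorem theorem4:
  fixes d n :: nat
    and \<rho> :: "complex mat"
    and E :: "nat \<Rightarrow> complex mat \<Rightarrow> complex mat"
    and \<sigma> :: "nat \<Rightarrow> complex mat"
    and Spec :: "nat \<Rightarrow> real set"
    and SP :: "nat \<Rightarrow> real \<Rightarrow> complex mat"
  assumes rho: "density_op d \<rho>"
    and chans: "\<forall>j. 1 \<le> j \<and> j \<le> n \<longrightarrow> cptp d (E j)"
    and basis: "herm_op_basis d \<sigma>"
    and spec: "\<forall>\<mu> < d^2. spectral_decomp d (\<sigma> \<mu>) (Spec \<mu>) (SP \<mu>)"
  shows "kd_state d \<sigma> \<rho> E Spec SP 0 = \<rho> \<and>
         (\<forall>k. 1 \<le> k \<and> k \<le> n \<longrightarrow>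
            kd_state d \<sigma> \<rho> E Spec SP k
              = star d (jamiolkowski d (E k)) (kd_state d \<sigma> \<rho> E Spec SP (k - 1)))"
proof -
  have rc: "\<rho> \<in> carrier_mat d d" and tr: "mtrace \<rho> = 1"
    using rho unfolding density_op_def psd_def by auto
  have d0: "d > 0"
  proof (rule ccontr)
    assume "\<not> d > 0"
    then have "d = 0" by simp
    then have "mtrace \<rho> = 0" using rc unfolding mtrace_def by simp
    then show False using tr by simp
  qed
  have linE: "\<forall>j. 1 \<le> j \<and> j \<le> n \<longrightarrow> linear_op_map d (E j)"
    using chans unfolding cptp_def by auto
  have p1: "kd_state d \<sigma> \<rho> E Spec SP 0 = \<rho>"
  proof (rule eq_matI)
    fix i j assume "i < dim_row \<rho>" "j < dim_col \<rho>"
    then have ij: "i < d" "j < d" using rc by auto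
    have "kd_state d \<sigma> \<rho> E Spec SP 0 $$ (i,j) =
       mtrace (kd_chain \<rho> E (\<lambda>k. ket_bra d (j div d^k mod d) (i div d^k mod d)) 0)"
      using ij by (intro kd_state_entry[OF basis spec rc linE]) auto
    also have "\<dots> = mtrace (\<rho> * ket_bra d j i)" using ij by simp
    also have "\<dots> = \<rho> $$ (i,j)" by (rule mtrace_kb[OF rc ij(2) ij(1)])
    finally show "kd_state d \<sigma> \<rho> E Spec SP 0 $$ (i,j) = \<rho> $$ (i,j)" .
  qed (use rc in \<open>auto simp: kd_state_def\<close>)
  have p2: "\<forall>k. 1 \<le> k \<and> k \<le> n \<longrightarrow>
            kd_state d \<sigma> \<rho> E Spec SP k
              = star d (jamiolkowski d (E k)) (kd_state d \<sigma> \<rho> E Spec SP (k - 1))"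
  proof (intro allI impI)
    fix k assume k: "1 \<le> k \<and> k \<le> n"
    then obtain m where m: "k = Suc m" by (cases k) auto
    show "kd_state d \<sigma> \<rho> E Spec SP k
              = star d (jamiolkowski d (E k)) (kd_state d \<sigma> \<rho> E Spec SP (k - 1))"
      unfolding m using star_step[OF basis spec rc linE _ d0, of m] k m by simp
  qed
  show ?thesis using p1 p2 by blast
qed

end
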